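(* Let $T\in(0,\infty)$ and let $A_a(t)\in\mathbb{R}^{N\times N}$, $B_a(t)\in\mathbb{R}^{N\times n_w}$, $Q(t)\in\mathbb{S}^N$, $S(t)\in\mathbb{R}^{N\times n_w}$, $R(t)\in\mathbb{S}^{n_w}$ be continuous functions of $t\in[0,T]$. For a differentiable $Y:[0,T]\to\mathbb{S}^N$ and $W:[0,T]\to\mathbb{S}^N$ write $RDE(t,Y)=W$ for $$\dot Y+A_a^\top Y+YA_a+Q-(YB_a+S)R^{-1}(YB_a+S)^\top=W\quad\text{at time }t.$$ Assume: 1. $R(t)\prec0$ for all $t\in[0,T]$; 2. $Y_0:[0,T]\to\mathbb{S}^N$ is differentiable with $Y_0(T)=0$ and $RDE(t,Y_0)=0$ for all $t\in[0,T]$; 3. $(\epsilon_k)_{k\ge1}$ are positive scalars with $\epsilon_k\ge\epsilon_{k+1}$ for all $k$ and $\lim_{k\to\infty}\epsilon_k=0$; 4. $Y_k:[0,T]\to\mathbb{S}^N$ ($k=1,2,\dots$) are differentiable with $Y_k(T)=0$ and $RDE(t,Y_k)=-\epsilon_k I$ for all $t\in[0,T]$. Then $\lim_{k\to\infty}\|Y_k(t)-Y_0(t)\|=0$ for all $t\in[0,T]$.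
   Context: $\mathbb{S}^n$ denotes the set of real symmetric $n\times n$ matrices; $\prec0$ means negative definite; $\|\cdot\|$ is the matrix induced 2-norm. *)

theory Defs
  imports "HOL-Analysis.Analysis"
begin

definition symmetric_mat :: "real^'n^'n \<Rightarrow> bool" where
  "symmetric_mat M \<longleftrightarrow> transpose M = M"

definition neg_def :: "real^'n^'n \<Rightarrow> bool" where
  "neg_def M \<longleftrightarrow> symmetric_mat M \<and> (\<forall>x. x \<noteq> 0 \<longrightarrow> x \<bullet> (M *v x) < 0)"

definition mat_norm2 :: "real^'m^'n \<Rightarrow> real" where
  "mat_norm2 M = onorm (\<lambda>x. M *v x)"

text \<open>Left-hand side of the Riccati differential equation at time t, with the
  time derivative taken within [0,T] (one-sided at the endpoints).\<close>
definition RDE ::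
  "real \<Rightarrow> (real \<Rightarrow> real^'N^'N) \<Rightarrow> (real \<Rightarrow> real^'w^'N) \<Rightarrow> (real \<Rightarrow> real^'N^'N)
    \<Rightarrow> (real \<Rightarrow> real^'w^'N) \<Rightarrow> (real \<Rightarrow> real^'w^'w) \<Rightarrow> real \<Rightarrow> (real \<Rightarrow> real^'N^'N)
    \<Rightarrow> real^'N^'N" where
  "RDE T A B Q S R t Y =
     vector_derivative Y (at t within {0..T}) + transpose (A t) ** Y t + Y t ** A t + Q t
     - (Y t ** B t + S t) ** matrix_inv (R t) ** transpose (Y t ** B t + S t)"

end

theory Submission imports Defs begin

lemma boot_step:
  fixes n n' :: "real \<Rightarrow> real"
  assumes K: "K > 0" and c: "c \<ge> 0" and t: "0 \<le> t" "t \<le> T"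
    and cont: "continuous_on {0..T} n"
    and der: "\<forall>s\<in>{0<..<T}. (n has_real_derivative n' s) (at s)"
    and ineq: "\<forall>s\<in>{0<..<T}. n s \<le> 1 \<longrightarrow> n' s \<ge> -K * n s - c"
    and nT: "n T = 0"
    and small: "\<forall>s\<in>{t<..<T}. n s \<le> 1"
  shows "n t \<le> (c/K) * exp (K*T)"
proof -
  define g where "g s = (n s + c/K) * exp (K * s)" for s
  have "g t \<le> g T"
  proof (rule DERIV_nonneg_imp_increasing_open[OF t(2)])
    fix s assume s: "t < s" "s < T"
    then have s0: "s \<in> {0<..<T}" using t by auto
    have d: "(g has_real_derivative (n' s * exp (K * s) + (n s + c/K) * (exp (K * s) * K))) (at s)"
      unfolding g_def using der s0
      by (auto intro!: derivative_eq_intros)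
    have "n' s \<ge> -K * n s - c" using ineq s0 small s by auto
    then have "n' s + K * n s + c \<ge> 0" by linarith
    then have "0 \<le> exp (K * s) * (n' s + K * n s + c)" by simp
    also have "exp (K * s) * (n' s + K * n s + c) = n' s * exp (K * s) + (n s + c/K) * (exp (K * s) * K)"
      using K by (simp add: field_simps)
    finally show "\<exists>y. (g has_real_derivative y) (at s) \<and> 0 \<le> y" using d by blast
  next
    have "continuous_on {t..T} n" using t by (intro continuous_on_subset[OF cont]) auto
    then show "continuous_on {t..T} g" unfolding g_def by (auto intro!: continuous_intros)
  qed
  then have "(n t + c/K) * exp (K * t) \<le> (c/K) * exp (K*T)" by (simp add: g_def nT)
  moreover have "exp (K * t) \<ge> 1" using K t by simp
  moreover have "c/K \<ge> 0" using K c by simp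
  ultimately have "n t + c/K \<le> (c/K) * exp (K*T)"
    by (smt (verit, ccfv_threshold) mult_le_cancel_left1 mult_nonneg_nonneg exp_ge_zero)
  then show ?thesis using \<open>c/K \<ge> 0\<close> by linarith
qed

lemma boot:
  fixes n n' :: "real \<Rightarrow> real"
  assumes K: "K > 0" and c: "c \<ge> 0" and T: "0 \<le> T"
    and cont: "continuous_on {0..T} n"
    and der: "\<forall>s\<in>{0<..<T}. (n has_real_derivative n' s) (at s)"
    and ineq: "\<forall>s\<in>{0<..<T}. n s \<le> 1 \<longrightarrow> n' s \<ge> -K * n s - c"
    and nT: "n T = 0"
    and small: "(c/K) * exp (K*T) < 1"
  shows "\<forall>t\<in>{0..T}. n t \<le> (c/K) * exp (K*T)"
proof -
  have all: "\<forall>s\<in>{0..T}. n s < 1"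
  proof (rule ccontr)
    assume "\<not> ?thesis"
    define S where "S = {s \<in> {0..T}. 1 \<le> n s}"
    have ne: "S \<noteq> {}" using \<open>\<not> _\<close> unfolding S_def by force
    have bd: "bdd_above S" unfolding S_def by (auto intro: bdd_aboveI[where M=T])
    have cl: "closed S" unfolding S_def
      by (rule continuous_on_closed_Collect_le[OF continuous_on_const cont]) simp
    have t1: "Sup S \<in> S" by (rule closed_contains_Sup[OF ne bd cl])
    have "\<forall>s\<in>{Sup S<..<T}. n s \<le> 1"
    proof
      fix s assume s: "s \<in> {Sup S<..<T}"
      have "s \<notin> S" using s cSup_upper[OF _ bd] by force
      moreover have "s \<in> {0..T}" using s t1 unfolding S_def by auto
      ultimately show "n s \<le> 1" unfolding S_def by auto
    qed
    then have "n (Sup S) \<le> (c/K) * exp (K*T)"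
      using t1 unfolding S_def
      by (intro boot_step[OF K c _ _ cont der ineq nT]) auto
    then show False using t1 small unfolding S_def by auto
  qed
  show ?thesis
  proof
    fix t assume t: "t \<in> {0..T}"
    show "n t \<le> (c/K) * exp (K*T)"
      using t all by (intro boot_step[OF K c _ _ cont der ineq nT]) (auto simp: less_imp_le)
  qed
qed


lemma mdiff_l: "(A::real^'n^'m) ** (B - C) = A ** B - A ** C"
  by (simp add: matrix_matrix_mult_def vec_eq_iff algebra_simps sum_subtractf)
lemma mdiff_r: "((A::real^'n^'m) - B) ** C = A ** C - B ** C"
  by (simp add: matrix_matrix_mult_def vec_eq_iff algebra_simps sum_subtractf)
lemma madd_r: "((A::real^'n^'m) + B) ** C = A ** C + B ** C"
  by (simp add: matrix_matrix_mult_def vec_eq_iff algebra_simps sum.distrib)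
lemma transpose_diff: "transpose ((A::real^'n^'m) - B) = transpose A - transpose B"
  by (simp add: transpose_def vec_eq_iff)
lemma transpose_add: "transpose ((A::real^'n^'m) + B) = transpose A + transpose B"
  by (simp add: transpose_def vec_eq_iff)

lemma quad_diff:
  fixes U W :: "real^'w^'n" and Ri :: "real^'w^'w" and V Z :: "real^'n^'w"
  shows "U ** Ri ** V - W ** Ri ** Z = (U - W) ** Ri ** V + W ** Ri ** (V - Z)"
  by (simp add: mdiff_l mdiff_r)

lemma mn_nonneg: "0 \<le> mat_norm2 (M::real^'n^'m)"
  unfolding mat_norm2_def by (rule onorm_pos_le[OF matrix_vector_mul_bounded_linear])

lemma mn_apply: "norm ((M::real^'n^'m) *v x) \<le> mat_norm2 M * norm x"
  unfolding mat_norm2_def by (rule onorm[OF matrix_vector_mul_bounded_linear])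

lemma mn_mul: "mat_norm2 ((M::real^'k^'m) ** (N::real^'n^'k)) \<le> mat_norm2 M * mat_norm2 N"
proof -
  have "(\<lambda>x. (M ** N) *v x) = (\<lambda>x. M *v x) \<circ> (\<lambda>x. N *v x)"
    by (auto simp: matrix_vector_mul_assoc)
  then show ?thesis unfolding mat_norm2_def
    using onorm_compose[OF matrix_vector_mul_bounded_linear matrix_vector_mul_bounded_linear]
    by simp
qed

lemma mn_add: "mat_norm2 ((M::real^'n^'m) + N) \<le> mat_norm2 M + mat_norm2 N"
proof -
  have "(\<lambda>x. (M + N) *v x) = (\<lambda>x. M *v x + N *v x)"
    by (auto simp: matrix_vector_mult_add_rdistrib)
  then show ?thesis unfolding mat_norm2_def
    using onorm_triangle[OF matrix_vector_mul_bounded_linear matrix_vector_mul_bounded_linear]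
    by simp
qed

lemma mn_neg: "mat_norm2 (- (M::real^'n^'m)) = mat_norm2 M"
proof -
  have "(\<lambda>x. (- M) *v x) = (\<lambda>x. - (M *v x))"
    by (auto simp: matrix_vector_mult_def vec_eq_iff sum_negf)
  then show ?thesis unfolding mat_norm2_def
    using onorm_neg[of "(*v) M"] by simp
qed

lemma mn_diff: "mat_norm2 ((M::real^'n^'m) - N) \<le> mat_norm2 M + mat_norm2 N"
  using mn_add[of M "- N"] mn_neg[of N] by simp

lemma mn_scale: "mat_norm2 (c *\<^sub>R (M::real^'n^'m)) = \<bar>c\<bar> * mat_norm2 M"
proof -
  have "(\<lambda>x. (c *\<^sub>R M) *v x) = (\<lambda>x. c *\<^sub>R (M *v x))"
    by (rule ext) (simp add: matrix_vector_mult_def vec_eq_iff sum_distrib_left mult.assoc)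
  then show ?thesis unfolding mat_norm2_def
    using onorm_scaleR[OF matrix_vector_mul_bounded_linear, of c M] by simp
qed

lemma mn_le_norm: "mat_norm2 (M::real^'n^'m) \<le> real CARD('m) * real CARD('n) * norm M"
  unfolding mat_norm2_def
proof (rule onorm_le_matrix_component)
  fix i j
  have "\<bar>M $ i $ j\<bar> \<le> norm (M $ i)" by (rule component_le_norm_cart)
  also have "\<dots> \<le> norm M" by (rule Finite_Cartesian_Product.norm_nth_le)
  finally show "\<bar>M $ i $ j\<bar> \<le> norm M" .
qed

lemma mn_transpose: "mat_norm2 (transpose (M::real^'n^'m)) \<le> real CARD('n) * real CARD('m) * mat_norm2 M"
  unfolding mat_norm2_def
proof (rule onorm_le_matrix_component)
  fix i j
  show "\<bar>transpose M $ i $ j\<bar> \<le> onorm ((*v) M)"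
    unfolding transpose_def using matrix_component_le_onorm[of M j i] by simp
qed

lemma norm_le_mn: "norm (M::real^'n^'m) \<le> real CARD('m) * real CARD('n) * mat_norm2 M"
proof -
  have "norm M \<le> (\<Sum>i\<in>UNIV. norm (M $ i))"
    unfolding norm_vec_def by (rule L2_set_le_sum) simp
  also have "\<dots> \<le> (\<Sum>i\<in>(UNIV::'m set). \<Sum>j\<in>(UNIV::'n set). mat_norm2 M)"
  proof (rule sum_mono)
    fix i
    have "norm (M $ i) \<le> (\<Sum>j\<in>UNIV. \<bar>M $ i $ j\<bar>)" by (rule norm_le_l1_cart)
    also have "\<dots> \<le> (\<Sum>j\<in>(UNIV::'n set). mat_norm2 M)"
      by (rule sum_mono) (simp add: mat_norm2_def matrix_component_le_onorm)
    finally show "norm (M $ i) \<le> (\<Sum>j\<in>(UNIV::'n set). mat_norm2 M)" .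
  qed
  finally show ?thesis by simp
qed


lemma cont_bound:
  fixes f :: "real \<Rightarrow> 'a::real_normed_vector"
  assumes "continuous_on {0..T} f"
  shows "\<exists>C>0. \<forall>t\<in>{0..T}. norm (f t) \<le> C"
proof -
  have "bounded (f ` {0..T})"
    by (rule compact_imp_bounded[OF compact_continuous_image[OF assms compact_Icc]])
  then obtain C where "C > 0" "\<forall>y\<in>f ` {0..T}. norm y \<le> C" by (auto simp: bounded_pos)
  then show ?thesis by auto
qed

lemma mn_cont_bound:
  fixes f :: "real \<Rightarrow> real^'n^'m"
  assumes "continuous_on {0..T} f"
  shows "\<exists>C>0. \<forall>t\<in>{0..T}. mat_norm2 (f t) \<le> C"
proof -
  obtain C where C: "C > 0" "\<forall>t\<in>{0..T}. norm (f t) \<le> C" using cont_bound[OF assms] by blast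
  define D where "D = real CARD('m) * real CARD('n) * C"
  have "D > 0" using C by (simp add: D_def)
  moreover have "\<forall>t\<in>{0..T}. mat_norm2 (f t) \<le> D"
  proof
    fix t assume t: "t \<in> {0..T}"
    have "mat_norm2 (f t) \<le> real CARD('m) * real CARD('n) * norm (f t)" by (rule mn_le_norm)
    also have "\<dots> \<le> D" unfolding D_def using C t by (intro mult_left_mono) auto
    finally show "mat_norm2 (f t) \<le> D" .
  qed
  ultimately show ?thesis by blast
qed

lemma neg_def_inv:
  fixes M :: "real^'n^'n"
  assumes "neg_def M"
  shows "M ** matrix_inv M = mat 1 \<and> matrix_inv M ** M = mat 1"
proof -
  have "\<forall>x. M *v x = 0 \<longrightarrow> x = 0"
    using assms unfolding neg_def_def by (metis inner_zero_right less_irrefl)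
  then obtain B where "B ** M = mat 1" using matrix_left_invertible_ker by blast
  then have "M ** B = mat 1 \<and> B ** M = mat 1" using matrix_left_right_inverse by blast
  then show ?thesis unfolding matrix_inv_def by (rule someI)
qed

lemma inv_bound:
  fixes R :: "real \<Rightarrow> real^'w^'w"
  assumes contR: "continuous_on {0..T} R" and negR: "\<forall>t\<in>{0..T}. neg_def (R t)"
    and T: "0 \<le> T"
  shows "\<exists>L>0. \<forall>t\<in>{0..T}. mat_norm2 (matrix_inv (R t)) \<le> L"
proof -
  define h where "h p = snd p \<bullet> (R (fst p) *v snd p)" for p :: "real \<times> (real^'w)"
  define K where "K = {0..T} \<times> sphere (0::real^'w) 1"
  have cK: "compact K" unfolding K_def by (intro compact_Times compact_Icc compact_sphere)
  obtain i :: 'w where True by blast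
  have "(0, axis i 1) \<in> K" using T unfolding K_def by simp
  then have neK: "K \<noteq> {}" by blast
  have ch: "continuous_on K h"
  proof -
    have cR: "continuous_on K (\<lambda>p. R (fst p))"
      by (rule continuous_on_compose2[OF contR continuous_on_fst]) (auto simp: K_def)
    show ?thesis unfolding h_def matrix_vector_mult_def inner_vec_def
      by (intro continuous_intros cR)
  qed
  obtain p0 where p0: "p0 \<in> K" "\<forall>p\<in>K. h p \<le> h p0"
    using continuous_attains_sup[OF cK neK ch] by blast
  define lam where "lam = - h p0"
  have "h p0 < 0"
  proof -
    have "snd p0 \<noteq> 0" "neg_def (R (fst p0))" using p0(1) negR unfolding K_def by auto
    then show ?thesis unfolding h_def neg_def_def by blast
  qed
  then have lam: "lam > 0" by (simp add: lam_def)
  have quad: "x \<bullet> (R t *v x) \<le> - lam * (norm x)^2" if t: "t \<in> {0..T}" for t x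
  proof (cases "x = 0")
    case True then show ?thesis by simp
  next
    case False
    define u where "u = x /\<^sub>R norm x"
    have "(t, u) \<in> K" using t False unfolding K_def u_def by simp
    then have "h (t,u) \<le> - lam" using p0 lam_def by auto
    then have "u \<bullet> (R t *v u) \<le> - lam" by (simp add: h_def)
    moreover have "x = norm x *\<^sub>R u" using False by (simp add: u_def)
    ultimately have "x \<bullet> (R t *v x) = (norm x)^2 * (u \<bullet> (R t *v u))"
      by (metis (no_types, lifting) inner_scaleR_left inner_scaleR_right matrix_vector_mult_scaleR
          mult.assoc power2_eq_square)
    also have "\<dots> \<le> (norm x)^2 * (- lam)"
      using \<open>u \<bullet> (R t *v u) \<le> - lam\<close> by (intro mult_left_mono) auto
    finally show ?thesis by (simp add: mult.commute)
  qed
  have "\<forall>t\<in>{0..T}. mat_norm2 (matrix_inv (R t)) \<le> 1/lam"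
  proof
    fix t assume t: "t \<in> {0..T}"
    have RR: "R t ** matrix_inv (R t) = mat 1" using neg_def_inv negR t by blast
    show "mat_norm2 (matrix_inv (R t)) \<le> 1/lam" unfolding mat_norm2_def
    proof (rule onorm_le)
      fix y
      define x where "x = matrix_inv (R t) *v y"
      have "R t *v x = y" unfolding x_def by (simp add: matrix_vector_mul_assoc RR)
      then have "lam * (norm x)^2 \<le> - (x \<bullet> y)" using quad[OF t, of x] by simp
      also have "\<dots> \<le> norm x * norm y" by (metis Cauchy_Schwarz_ineq2 abs_le_iff)
      finally have "lam * (norm x)^2 \<le> norm x * norm y" .
      then have "lam * norm x \<le> norm y"
        by (cases "x = 0") (auto simp: power2_eq_square mult.assoc[symmetric])
      then show "norm (matrix_inv (R t) *v y) \<le> 1/lam * norm y"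
        using lam by (simp add: x_def field_simps)
    qed
  qed
  then show ?thesis using lam by (intro exI[of _ "1/lam"]) auto
qed


lemma mn_mul3: "mat_norm2 ((M::real^'k^'m) ** (N::real^'l^'k) ** (P::real^'n^'l))
   \<le> mat_norm2 M * mat_norm2 N * mat_norm2 P"
proof -
  have "mat_norm2 (M ** N ** P) \<le> mat_norm2 (M ** N) * mat_norm2 P" by (rule mn_mul)
  also have "\<dots> \<le> mat_norm2 M * mat_norm2 N * mat_norm2 P"
    by (intro mult_right_mono mn_mul mn_nonneg)
  finally show ?thesis .
qed

lemma pointwise:
  fixes A Q Yk Y0 Vk V0 :: "real^'N^'N" and B S :: "real^'w^'N" and Ri :: "real^'w^'w"
  assumes ek: "Vk + transpose A ** Yk + Yk ** A + Q - (Yk ** B + S) ** Ri ** transpose (Yk ** B + S) = - (eps *\<^sub>R mat 1)"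
    and e0: "V0 + transpose A ** Y0 + Y0 ** A + Q - (Y0 ** B + S) ** Ri ** transpose (Y0 ** B + S) = 0"
    and sk: "transpose Yk = Yk" and s0: "transpose Y0 = Y0"
  shows "mat_norm2 (Vk - V0) \<le> \<bar>eps\<bar> * mat_norm2 (mat 1 :: real^'N^'N)
     + (mat_norm2 (transpose A) + mat_norm2 A + mat_norm2 B * mat_norm2 Ri * mat_norm2 (transpose (Y0 ** B + S))
        + mat_norm2 (Y0 ** B + S) * mat_norm2 Ri * mat_norm2 (transpose B)) * mat_norm2 (Yk - Y0)
     + mat_norm2 B * mat_norm2 Ri * mat_norm2 (transpose B) * (mat_norm2 (Yk - Y0))^2"
proof -
  define D where "D = Yk - Y0"
  define Pk where "Pk = Yk ** B + S"
  define P0 where "P0 = Y0 ** B + S"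
  have PkP0: "Pk - P0 = D ** B" unfolding Pk_def P0_def D_def by (simp add: mdiff_r)
  have tD: "transpose D = D" unfolding D_def by (simp add: transpose_diff sk s0)
  have PkP0T: "transpose Pk - transpose P0 = transpose B ** D"
    by (metis PkP0 transpose_diff matrix_transpose_mul tD)
  have PkT: "transpose Pk = transpose P0 + transpose B ** D" using PkP0T by (simp add: algebra_simps)
  have Vk: "Vk = - (eps *\<^sub>R mat 1) - (transpose A ** Yk + Yk ** A + Q - Pk ** Ri ** transpose Pk)"
    using ek unfolding Pk_def by (simp add: algebra_simps)
  have V0: "V0 = - (transpose A ** Y0 + Y0 ** A + Q - P0 ** Ri ** transpose P0)"
    using e0 unfolding P0_def by (simp add: algebra_simps eq_neg_iff_add_eq_0)
  have "Vk - V0 = - (eps *\<^sub>R mat 1) - (transpose A ** Yk - transpose A ** Y0) - (Yk ** A - Y0 ** A)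
       + (Pk ** Ri ** transpose Pk - P0 ** Ri ** transpose P0)"
    unfolding Vk V0 by (simp add: algebra_simps)
  also have "\<dots> = - (eps *\<^sub>R mat 1) - transpose A ** D - D ** A
       + ((D ** B) ** Ri ** transpose Pk + P0 ** Ri ** (transpose B ** D))"
  proof -
    have "transpose A ** Yk - transpose A ** Y0 = transpose A ** D" unfolding D_def by (simp add: mdiff_l)
    moreover have "Yk ** A - Y0 ** A = D ** A" unfolding D_def by (simp add: mdiff_r)
    moreover have "Pk ** Ri ** transpose Pk - P0 ** Ri ** transpose P0 = (D ** B) ** Ri ** transpose Pk + P0 ** Ri ** (transpose B ** D)"
      unfolding quad_diff[of Pk Ri "transpose Pk" P0 "transpose P0"] PkP0 PkP0T ..
    ultimately show ?thesis by simp
  qed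
  finally have eq: "Vk - V0 = - (eps *\<^sub>R mat 1) - transpose A ** D - D ** A
       + ((D ** B) ** Ri ** transpose Pk + P0 ** Ri ** (transpose B ** D))" .
  define d where "d = mat_norm2 D"
  have d0: "d \<ge> 0" unfolding d_def by (rule mn_nonneg)
  have "mat_norm2 (Vk - V0) \<le> mat_norm2 (- (eps *\<^sub>R mat 1) - transpose A ** D - D ** A)
        + mat_norm2 ((D ** B) ** Ri ** transpose Pk + P0 ** Ri ** (transpose B ** D))"
    unfolding eq by (rule mn_add)
  also have "\<dots> \<le> (\<bar>eps\<bar> * mat_norm2 (mat 1 :: real^'N^'N) + mat_norm2 (transpose A) * d + d * mat_norm2 A)
        + (mat_norm2 D * mat_norm2 B * mat_norm2 Ri * mat_norm2 (transpose Pk) + mat_norm2 P0 * mat_norm2 Ri * (mat_norm2 (transpose B) * d))"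
  proof (intro add_mono)
    have "mat_norm2 (- (eps *\<^sub>R mat 1) - transpose A ** D - D ** A)
       \<le> mat_norm2 (- (eps *\<^sub>R mat 1) - transpose A ** D) + mat_norm2 (D ** A)" by (rule mn_diff)
    also have "\<dots> \<le> (mat_norm2 (- (eps *\<^sub>R (mat 1 :: real^'N^'N))) + mat_norm2 (transpose A ** D)) + mat_norm2 (D ** A)"
      by (intro add_mono mn_diff order_refl)
    also have "\<dots> \<le> (\<bar>eps\<bar> * mat_norm2 (mat 1 :: real^'N^'N) + mat_norm2 (transpose A) * d) + d * mat_norm2 A"
      unfolding mn_neg mn_scale d_def by (intro add_mono mn_mul order_refl)
    finally show "mat_norm2 (- (eps *\<^sub>R mat 1) - transpose A ** D - D ** A) \<le> \<bar>eps\<bar> * mat_norm2 (mat 1 :: real^'N^'N) + mat_norm2 (transpose A) * d + d * mat_norm2 A" .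
  next
    have "mat_norm2 ((D ** B) ** Ri ** transpose Pk + P0 ** Ri ** (transpose B ** D))
      \<le> mat_norm2 ((D ** B) ** Ri ** transpose Pk) + mat_norm2 (P0 ** Ri ** (transpose B ** D))" by (rule mn_add)
    also have "\<dots> \<le> mat_norm2 (D ** B) * mat_norm2 Ri * mat_norm2 (transpose Pk) + mat_norm2 P0 * mat_norm2 Ri * mat_norm2 (transpose B ** D)"
      by (intro add_mono mn_mul3)
    also have "\<dots> \<le> mat_norm2 D * mat_norm2 B * mat_norm2 Ri * mat_norm2 (transpose Pk) + mat_norm2 P0 * mat_norm2 Ri * (mat_norm2 (transpose B) * d)"
      unfolding d_def by (intro add_mono mult_right_mono mult_left_mono mn_mul mn_nonneg mult_nonneg_nonneg)
    finally show "mat_norm2 ((D ** B) ** Ri ** transpose Pk + P0 ** Ri ** (transpose B ** D))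
      \<le> mat_norm2 D * mat_norm2 B * mat_norm2 Ri * mat_norm2 (transpose Pk) + mat_norm2 P0 * mat_norm2 Ri * (mat_norm2 (transpose B) * d)" .
  qed
  also have "\<dots> \<le> (\<bar>eps\<bar> * mat_norm2 (mat 1 :: real^'N^'N) + mat_norm2 (transpose A) * d + d * mat_norm2 A)
        + (d * mat_norm2 B * mat_norm2 Ri * (mat_norm2 (transpose P0) + mat_norm2 (transpose B) * d) + mat_norm2 P0 * mat_norm2 Ri * (mat_norm2 (transpose B) * d))"
  proof -
    have "mat_norm2 (transpose Pk) \<le> mat_norm2 (transpose P0) + mat_norm2 (transpose B) * d"
      unfolding PkT d_def by (rule order_trans[OF mn_add add_left_mono[OF mn_mul]])
    then show ?thesis unfolding d_def
      by (intro add_mono order_refl mult_left_mono) (auto intro!: mult_nonneg_nonneg mn_nonneg)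
  qed
  also have "\<dots> = \<bar>eps\<bar> * mat_norm2 (mat 1 :: real^'N^'N)
     + (mat_norm2 (transpose A) + mat_norm2 A + mat_norm2 B * mat_norm2 Ri * mat_norm2 (transpose P0)
        + mat_norm2 P0 * mat_norm2 Ri * mat_norm2 (transpose B)) * d
     + mat_norm2 B * mat_norm2 Ri * mat_norm2 (transpose B) * d^2"
    by (simp add: algebra_simps power2_eq_square)
  finally show ?thesis unfolding d_def D_def P0_def .
qed


lemma inner_deriv:
  fixes f :: "real \<Rightarrow> 'a::real_inner"
  assumes "(f has_vector_derivative f') (at s)"
  shows "((\<lambda>s. f s \<bullet> f s) has_real_derivative 2 * (f s \<bullet> f')) (at s)"
proof -
  have d: "(f has_derivative (\<lambda>h. h *\<^sub>R f')) (at s)" using assms by (simp add: has_vector_derivative_def)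
  have "((\<lambda>s. f s \<bullet> f s) has_derivative (\<lambda>h. f s \<bullet> (h *\<^sub>R f') + (h *\<^sub>R f') \<bullet> f s)) (at s)"
    by (rule has_derivative_inner[OF d d])
  then show ?thesis unfolding has_field_derivative_def
    by (rule has_derivative_eq_rhs) (auto simp: fun_eq_iff inner_commute algebra_simps)
qed

lemma real_ineq:
  fixes F g e i1 L m c4 c6 :: real
  assumes F: "0 \<le> F" "F\<^sup>2 \<le> 1" and g: "g \<le> c6 * (e * i1 + L * (c4 * F) + m * (c4 * F)\<^sup>2)"
    and nn: "0 \<le> i1" "0 \<le> L" "0 \<le> m" "0 \<le> c4" "0 \<le> c6" and e: "0 \<le> e" "e \<le> 1"
  shows "2 * F * g \<le> c6 * i1 * e + (c6 * i1 + 2 * c6 * L * c4 + 2 * c6 * m * c4\<^sup>2) * F\<^sup>2"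
proof -
  have F1: "F \<le> 1" using F by (metis abs_le_square_iff abs_of_nonneg abs_one one_power2)
  have F3: "F * F\<^sup>2 \<le> F\<^sup>2" using F F1 by (simp add: mult_left_le_one_le)
  have F2: "2 * F \<le> 1 + F\<^sup>2" using sum_squares_bound[of F 1] by (simp add: power2_eq_square)
  have "2 * F * g \<le> 2 * F * (c6 * (e * i1 + L * (c4 * F) + m * (c4 * F)\<^sup>2))"
    using g F by (intro mult_left_mono) auto
  also have "\<dots> = c6 * i1 * e * (2 * F) + 2 * c6 * L * c4 * F\<^sup>2 + 2 * c6 * m * c4\<^sup>2 * (F * F\<^sup>2)"
    by (simp add: algebra_simps power2_eq_square)
  also have "\<dots> \<le> c6 * i1 * e * (1 + F\<^sup>2) + 2 * c6 * L * c4 * F\<^sup>2 + 2 * c6 * m * c4\<^sup>2 * F\<^sup>2"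
    using F2 F3 nn e by (intro add_mono mult_left_mono order_refl) auto
  also have "\<dots> \<le> c6 * i1 * e + c6 * i1 * F\<^sup>2 + 2 * c6 * L * c4 * F\<^sup>2 + 2 * c6 * m * c4\<^sup>2 * F\<^sup>2"
  proof -
    have "c6 * i1 * e * F\<^sup>2 \<le> c6 * i1 * F\<^sup>2" 
    proof -
      have "c6 * i1 * F\<^sup>2 \<ge> 0" using nn by simp
      then have "(c6 * i1 * F\<^sup>2) * e \<le> (c6 * i1 * F\<^sup>2) * 1" using e by (intro mult_left_mono) auto
      then show ?thesis by (simp add: algebra_simps)
    qed
    then show ?thesis by (simp add: algebra_simps)
  qed
  also have "\<dots> = c6 * i1 * e + (c6 * i1 + 2 * c6 * L * c4 + 2 * c6 * m * c4\<^sup>2) * F\<^sup>2"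
    by (simp add: algebra_simps)
  finally show ?thesis .
qed

theorem lemmaA2:
  fixes T :: real
    and A :: "real \<Rightarrow> real^'N^'N" and B :: "real \<Rightarrow> real^'w^'N"
    and Q :: "real \<Rightarrow> real^'N^'N" and S :: "real \<Rightarrow> real^'w^'N"
    and R :: "real \<Rightarrow> real^'w^'w"
    and Y0 :: "real \<Rightarrow> real^'N^'N" and Y :: "nat \<Rightarrow> real \<Rightarrow> real^'N^'N"
    and eps :: "nat \<Rightarrow> real"
  assumes T_pos: "0 < T"
    and contA: "continuous_on {0..T} A" and contB: "continuous_on {0..T} B"
    and contQ: "continuous_on {0..T} Q" and contS: "continuous_on {0..T} S"
    and contR: "continuous_on {0..T} R"
    and symQ: "\<forall>t\<in>{0..T}. symmetric_mat (Q t)"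
    and symR: "\<forall>t\<in>{0..T}. symmetric_mat (R t)"
    and negR: "\<forall>t\<in>{0..T}. neg_def (R t)"
    and Y0_sym: "\<forall>t\<in>{0..T}. symmetric_mat (Y0 t)"
    and Y0_diff: "\<forall>t\<in>{0..T}. Y0 differentiable (at t within {0..T})"
    and Y0_T: "Y0 T = 0"
    and Y0_RDE: "\<forall>t\<in>{0..T}. RDE T A B Q S R t Y0 = 0"
    and eps_pos: "\<forall>k\<ge>1. 0 < eps k"
    and eps_mono: "\<forall>k\<ge>1. eps (Suc k) \<le> eps k"
    and eps_lim: "eps \<longlonglongrightarrow> 0"
    and Yk_sym: "\<forall>k\<ge>1. \<forall>t\<in>{0..T}. symmetric_mat (Y k t)"
    and Yk_diff: "\<forall>k\<ge>1. \<forall>t\<in>{0..T}. Y k differentiable (at t within {0..T})"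
    and Yk_T: "\<forall>k\<ge>1. Y k T = 0"
    and Yk_RDE: "\<forall>k\<ge>1. \<forall>t\<in>{0..T}. RDE T A B Q S R t (Y k) = - (eps k *\<^sub>R mat 1)"
  shows "\<forall>t\<in>{0..T}. (\<lambda>k. mat_norm2 (Y k t - Y0 t)) \<longlonglongrightarrow> 0"
proof -
  have T0: "0 \<le> T" using T_pos by simp
  have Y0c: "continuous_on {0..T} Y0"
    using Y0_diff by (auto simp: continuous_on_eq_continuous_within intro: differentiable_imp_continuous_within)
  have Ykc: "continuous_on {0..T} (Y k)" if "k \<ge> 1" for k
    using Yk_diff that by (auto simp: continuous_on_eq_continuous_within intro: differentiable_imp_continuous_within)
  obtain a where a: "a > 0" "\<forall>t\<in>{0..T}. mat_norm2 (A t) \<le> a" using mn_cont_bound[OF contA] by blast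
  obtain b where b: "b > 0" "\<forall>t\<in>{0..T}. mat_norm2 (B t) \<le> b" using mn_cont_bound[OF contB] by blast
  obtain y where y: "y > 0" "\<forall>t\<in>{0..T}. mat_norm2 (Y0 t) \<le> y" using mn_cont_bound[OF Y0c] by blast
  obtain sS where sS: "sS > 0" "\<forall>t\<in>{0..T}. mat_norm2 (S t) \<le> sS" using mn_cont_bound[OF contS] by blast
  obtain r where r: "r > 0" "\<forall>t\<in>{0..T}. mat_norm2 (matrix_inv (R t)) \<le> r"
    using inv_bound[OF contR negR T0] by blast
  define cN where "cN = real CARD('N)"
  define cw where "cw = real CARD('w)"
  have cN: "cN \<ge> 0" and cw: "cw \<ge> 0" by (simp_all add: cN_def cw_def)
  define aT where "aT = cN * cN * a"
  define bT where "bT = cw * cN * b"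
  define p where "p = y * b + sS"
  define pT where "pT = cw * cN * p"
  define L0 where "L0 = aT + a + b * r * pT + p * r * bT"
  define m0 where "m0 = b * r * bT"
  define i1 where "i1 = mat_norm2 (mat 1 :: real^'N^'N)"
  define c4 where "c4 = cN * cN"
  define K where "K = c4 * i1 + 2 * c4 * L0 * c4 + 2 * c4 * m0 * c4\<^sup>2 + 1"
  have pos: "aT \<ge> 0" "bT \<ge> 0" "p \<ge> 0" "pT \<ge> 0" "L0 \<ge> 0" "m0 \<ge> 0" "i1 \<ge> 0" "c4 \<ge> 0"
    using a b y sS r cN cw by (simp_all add: aT_def bT_def p_def pT_def L0_def m0_def i1_def c4_def mn_nonneg)
  have K: "K > 0" using pos unfolding K_def by (simp add: add_nonneg_pos)
  define V where "V k t = vector_derivative (Y k) (at t within {0..T})" for k t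
  define V0 where "V0 t = vector_derivative Y0 (at t within {0..T})" for t
  have Gb: "mat_norm2 (V k t - V0 t) \<le> eps k * i1 + L0 * mat_norm2 (Y k t - Y0 t) + m0 * (mat_norm2 (Y k t - Y0 t))\<^sup>2"
    if k: "k \<ge> 1" and t: "t \<in> {0..T}" for k t
  proof -
    define d where "d = mat_norm2 (Y k t - Y0 t)"
    have d: "d \<ge> 0" unfolding d_def by (rule mn_nonneg)
    have pw: "mat_norm2 (V k t - V0 t) \<le> \<bar>eps k\<bar> * i1
     + (mat_norm2 (transpose (A t)) + mat_norm2 (A t) + mat_norm2 (B t) * mat_norm2 (matrix_inv (R t)) * mat_norm2 (transpose (Y0 t ** B t + S t))
        + mat_norm2 (Y0 t ** B t + S t) * mat_norm2 (matrix_inv (R t)) * mat_norm2 (transpose (B t))) * d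
     + mat_norm2 (B t) * mat_norm2 (matrix_inv (R t)) * mat_norm2 (transpose (B t)) * d\<^sup>2"
      unfolding i1_def d_def
    proof (rule pointwise)
      show "V k t + transpose (A t) ** Y k t + Y k t ** A t + Q t - (Y k t ** B t + S t) ** matrix_inv (R t) ** transpose (Y k t ** B t + S t) = - (eps k *\<^sub>R mat 1)"
        using Yk_RDE k t unfolding RDE_def V_def by auto
      show "V0 t + transpose (A t) ** Y0 t + Y0 t ** A t + Q t - (Y0 t ** B t + S t) ** matrix_inv (R t) ** transpose (Y0 t ** B t + S t) = 0"
        using Y0_RDE t unfolding RDE_def V0_def by auto
      show "transpose (Y k t) = Y k t" using Yk_sym k t unfolding symmetric_mat_def by auto
      show "transpose (Y0 t) = Y0 t" using Y0_sym t unfolding symmetric_mat_def by auto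
    qed
    have hA: "mat_norm2 (transpose (A t)) \<le> aT"
      using mn_transpose[of "A t"] a t unfolding aT_def cN_def
      by (smt (verit) mult_left_mono mult_nonneg_nonneg of_nat_0_le_iff)
    have hB: "mat_norm2 (transpose (B t)) \<le> bT"
      using mn_transpose[of "B t"] b t unfolding bT_def cN_def cw_def
      by (smt (verit) mult_left_mono mult_nonneg_nonneg of_nat_0_le_iff)
    have hP: "mat_norm2 (Y0 t ** B t + S t) \<le> p"
    proof -
      have "mat_norm2 (Y0 t ** B t + S t) \<le> mat_norm2 (Y0 t) * mat_norm2 (B t) + mat_norm2 (S t)"
        by (rule order_trans[OF mn_add add_right_mono[OF mn_mul]])
      also have "\<dots> \<le> y * b + sS" using y b sS t by (intro add_mono mult_mono) (auto simp: mn_nonneg)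
      finally show ?thesis unfolding p_def .
    qed
    have hPT: "mat_norm2 (transpose (Y0 t ** B t + S t)) \<le> pT"
      using mn_transpose[of "Y0 t ** B t + S t"] hP unfolding pT_def cN_def cw_def
      by (smt (verit) mult_left_mono mult_nonneg_nonneg of_nat_0_le_iff)
    have hb: "mat_norm2 (B t) \<le> b" and hr: "mat_norm2 (matrix_inv (R t)) \<le> r" and ha: "mat_norm2 (A t) \<le> a"
      using a b r t by auto
    have c1: "mat_norm2 (B t) * mat_norm2 (matrix_inv (R t)) * mat_norm2 (transpose (Y0 t ** B t + S t)) \<le> b * r * pT"
      using hb hr hPT b r pos by (intro mult_mono) (auto simp: mn_nonneg)
    have c2: "mat_norm2 (Y0 t ** B t + S t) * mat_norm2 (matrix_inv (R t)) * mat_norm2 (transpose (B t)) \<le> p * r * bT"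
      using hP hr hB b r pos by (intro mult_mono) (auto simp: mn_nonneg)
    have c3: "mat_norm2 (B t) * mat_norm2 (matrix_inv (R t)) * mat_norm2 (transpose (B t)) \<le> m0"
      unfolding m0_def using hb hr hB b r pos by (intro mult_mono) (auto simp: mn_nonneg)
    have cL: "mat_norm2 (transpose (A t)) + mat_norm2 (A t) + mat_norm2 (B t) * mat_norm2 (matrix_inv (R t)) * mat_norm2 (transpose (Y0 t ** B t + S t))
        + mat_norm2 (Y0 t ** B t + S t) * mat_norm2 (matrix_inv (R t)) * mat_norm2 (transpose (B t)) \<le> L0"
      unfolding L0_def using hA ha c1 c2 by linarith
    have "\<bar>eps k\<bar> = eps k" using eps_pos k by auto
    then show ?thesis using pw cL c3 d
      unfolding d_def[symmetric]
      by (smt (verit) mult_right_mono zero_le_power2)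
  qed
  have bound: "\<forall>t\<in>{0..T}. (Y k t - Y0 t) \<bullet> (Y k t - Y0 t) \<le> (c4 * i1 * eps k / K) * exp (K * T)"
    if k: "k \<ge> 1" and e1: "eps k \<le> 1" and sm: "(c4 * i1 * eps k / K) * exp (K * T) < 1" for k
  proof (rule boot[OF K _ T0])
    show "0 \<le> c4 * i1 * eps k"
    proof -
      have "0 < eps k" using eps_pos k by auto
      then show ?thesis using pos by simp
    qed
    show "continuous_on {0..T} (\<lambda>s. (Y k s - Y0 s) \<bullet> (Y k s - Y0 s))"
      using Ykc[OF k] Y0c by (intro continuous_intros)
    show "(Y k T - Y0 T) \<bullet> (Y k T - Y0 T) = 0" using Yk_T k Y0_T by simp
    show "(c4 * i1 * eps k / K) * exp (K * T) < 1" by (rule sm)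
    show "\<forall>s\<in>{0<..<T}. ((\<lambda>s. (Y k s - Y0 s) \<bullet> (Y k s - Y0 s)) has_real_derivative
            2 * ((Y k s - Y0 s) \<bullet> (V k s - V0 s))) (at s)"
    proof
      fix s assume s: "s \<in> {0<..<T}"
      then have si: "s \<in> {0..T}" and at: "at s within {0..T} = at s"
        by (auto intro!: at_within_interior)
      have "(Y k has_vector_derivative V k s) (at s within {0..T})"
        unfolding V_def using Yk_diff k si vector_derivative_works by blast
      then have dk: "(Y k has_vector_derivative V k s) (at s)" unfolding at .
      have "(Y0 has_vector_derivative V0 s) (at s within {0..T})"
        unfolding V0_def using Y0_diff si vector_derivative_works by blast
      then have d0: "(Y0 has_vector_derivative V0 s) (at s)" unfolding at .
      show "((\<lambda>s. (Y k s - Y0 s) \<bullet> (Y k s - Y0 s)) has_real_derivative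
            2 * ((Y k s - Y0 s) \<bullet> (V k s - V0 s))) (at s)"
        by (rule inner_deriv[of "\<lambda>s. Y k s - Y0 s", OF has_vector_derivative_diff[OF dk d0]])
    qed
    show "\<forall>s\<in>{0<..<T}. (Y k s - Y0 s) \<bullet> (Y k s - Y0 s) \<le> 1 \<longrightarrow>
        2 * ((Y k s - Y0 s) \<bullet> (V k s - V0 s)) \<ge> - K * ((Y k s - Y0 s) \<bullet> (Y k s - Y0 s)) - c4 * i1 * eps k"
    proof (intro ballI impI)
      fix s assume s: "s \<in> {0<..<T}" and n1: "(Y k s - Y0 s) \<bullet> (Y k s - Y0 s) \<le> 1"
      then have si: "s \<in> {0..T}" by auto
      define D where "D = Y k s - Y0 s"
      define G where "G = V k s - V0 s"
      define F where "F = norm D"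
      have nF: "D \<bullet> D = F\<^sup>2" unfolding F_def by (simp add: power2_norm_eq_inner)
      have F0: "F \<ge> 0" unfolding F_def by simp
      have dF: "mat_norm2 D \<le> c4 * F" unfolding c4_def cN_def F_def by (rule mn_le_norm)
      have gG: "norm G \<le> c4 * mat_norm2 G" unfolding c4_def cN_def by (rule norm_le_mn)
      have "mat_norm2 G \<le> eps k * i1 + L0 * mat_norm2 D + m0 * (mat_norm2 D)\<^sup>2"
        unfolding G_def D_def by (rule Gb[OF k si])
      also have "\<dots> \<le> eps k * i1 + L0 * (c4 * F) + m0 * (c4 * F)\<^sup>2"
        using dF pos by (intro add_mono mult_left_mono power_mono order_refl) (auto simp: mn_nonneg)
      finally have "norm G \<le> c4 * (eps k * i1 + L0 * (c4 * F) + m0 * (c4 * F)\<^sup>2)"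
        using gG pos by (smt (verit) mult_left_mono)
      then have ri: "2 * F * norm G \<le> c4 * i1 * eps k + (c4 * i1 + 2 * c4 * L0 * c4 + 2 * c4 * m0 * c4\<^sup>2) * F\<^sup>2"
        using F0 n1 nF pos eps_pos k e1 unfolding D_def[symmetric]
        by (intro real_ineq) auto
      have "- (D \<bullet> G) \<le> F * norm G" unfolding F_def
        by (metis Cauchy_Schwarz_ineq2 abs_le_iff)
      moreover have "2 * (F * norm G) \<le> c4 * i1 * eps k + (K - 1) * F\<^sup>2"
        using ri unfolding K_def by (simp add: mult.assoc)
      ultimately have "2 * (D \<bullet> G) \<ge> - (c4 * i1 * eps k) - (K - 1) * F\<^sup>2"
        by linarith
      moreover have "F\<^sup>2 \<ge> 0" by simp
      ultimately show "2 * ((Y k s - Y0 s) \<bullet> (V k s - V0 s)) \<ge> - K * ((Y k s - Y0 s) \<bullet> (Y k s - Y0 s)) - c4 * i1 * eps k"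
      proof -
        have "(K - 1) * F\<^sup>2 = K * F\<^sup>2 - F\<^sup>2" by (simp add: algebra_simps)
        then show ?thesis unfolding D_def[symmetric] G_def[symmetric] nF
          using \<open>2 * (D \<bullet> G) \<ge> - (c4 * i1 * eps k) - (K - 1) * F\<^sup>2\<close> \<open>F\<^sup>2 \<ge> 0\<close> by linarith
      qed
    qed
  qed
  show ?thesis
  proof
    fix t assume t: "t \<in> {0..T}"
    define h where "h k = c4 * sqrt ((c4 * i1 * eps k / K) * exp (K * T))" for k
    have h0: "h \<longlonglongrightarrow> 0"
    proof -
      have "h \<longlonglongrightarrow> c4 * sqrt ((c4 * i1 * 0 / K) * exp (K * T))"
        unfolding h_def using K by (intro tendsto_intros eps_lim) auto
      then show ?thesis by simp
    qed
    have q0: "(\<lambda>k. (c4 * i1 * eps k / K) * exp (K * T)) \<longlonglongrightarrow> (c4 * i1 * 0 / K) * exp (K * T)"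
      using K by (intro tendsto_intros eps_lim) auto
    have ev1: "eventually (\<lambda>k. (c4 * i1 * eps k / K) * exp (K * T) < 1) sequentially"
      using order_tendstoD(2)[OF q0] by simp
    have ev2: "eventually (\<lambda>k. eps k < 1) sequentially"
      using order_tendstoD(2)[OF eps_lim] by simp
    have ev: "eventually (\<lambda>k. mat_norm2 (Y k t - Y0 t) \<le> h k) sequentially"
      using ev1 ev2 eventually_ge_at_top[of 1]
    proof eventually_elim
      case (elim k)
      have nb: "(Y k t - Y0 t) \<bullet> (Y k t - Y0 t) \<le> (c4 * i1 * eps k / K) * exp (K * T)"
        using bound[of k] elim t by auto
      have "mat_norm2 (Y k t - Y0 t) \<le> c4 * norm (Y k t - Y0 t)"
        unfolding c4_def cN_def by (rule mn_le_norm)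
      also have "norm (Y k t - Y0 t) = sqrt ((Y k t - Y0 t) \<bullet> (Y k t - Y0 t))"
        by (simp add: norm_eq_sqrt_inner)
      also have "c4 * \<dots> \<le> h k" unfolding h_def using nb pos
        by (intro mult_left_mono real_sqrt_le_mono) auto
      finally show ?case .
    qed
    show "(\<lambda>k. mat_norm2 (Y k t - Y0 t)) \<longlonglongrightarrow> 0"
      by (rule tendsto_sandwich[OF _ ev tendsto_const h0]) (simp add: mn_nonneg)
  qed
qed

end
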